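(* For every set $X$, $\mathrm{Aut}(\overline{\mathcal{PI}^{\ast}}_X)\cong\mathcal{S}_X$, the symmetric group on $X$.
   Context: Let $X'=\{x':x\in X\}$ be a disjoint copy of $X$. $\overline{\mathcal{PI}^{\ast}}_X$ is the set of partitions of $X\cup X'$ each of whose blocks is a singleton (point) or a generalised line (a set meeting both $X$ and $X'$), with product $\circ$: $\alpha\circ\beta$ has as generalised lines exactly the sets $A\cup D'$ such that $A\cup B'$ is a generalised line of $\alpha$ and $B\cup D'$ is a generalised line of $\beta$ (same $B\subseteq X$), all other elements being points. $\mathrm{Aut}$ denotes the automorphism group. *)

theory Defs
  imports "HOL-Algebra.Bij"
begin

text \<open>The ground set X \<union> X' is modelled as Inl ` X \<union> Inr ` X in the sum type;
  Inl x stands for x and Inr x for x'.\<close>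

definition ground :: "'a set \<Rightarrow> ('a + 'a) set" where
  "ground X = Inl ` X \<union> Inr ` X"

definition is_partition_of :: "'b set \<Rightarrow> 'b set set \<Rightarrow> bool" where
  "is_partition_of S P \<longleftrightarrow> (\<forall>B\<in>P. B \<noteq> {}) \<and> \<Union>P = S \<and>
     (\<forall>B\<in>P. \<forall>C\<in>P. B \<noteq> C \<longrightarrow> B \<inter> C = {})"

definition gen_line :: "('a + 'a) set \<Rightarrow> bool" where
  "gen_line B \<longleftrightarrow> B \<inter> range Inl \<noteq> {} \<and> B \<inter> range Inr \<noteq> {}"

definition PIstar :: "'a set \<Rightarrow> ('a + 'a) set set set" where
  "PIstar X = {P. is_partition_of (ground X) P \<and>
      (\<forall>B\<in>P. (\<exists>z. B = {z}) \<or> gen_line B)}"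

definition PI_lines_prod :: "('a + 'a) set set \<Rightarrow> ('a + 'a) set set \<Rightarrow> ('a + 'a) set set" where
  "PI_lines_prod \<alpha> \<beta> = {Inl ` A \<union> Inr ` D | A B D.
      Inl ` A \<union> Inr ` B \<in> \<alpha> \<and> gen_line (Inl ` A \<union> Inr ` B) \<and>
      Inl ` B \<union> Inr ` D \<in> \<beta> \<and> gen_line (Inl ` B \<union> Inr ` D)}"

definition PI_prod :: "'a set \<Rightarrow> ('a + 'a) set set \<Rightarrow> ('a + 'a) set set \<Rightarrow> ('a + 'a) set set" where
  "PI_prod X \<alpha> \<beta> = PI_lines_prod \<alpha> \<beta> \<union>
      {{z} | z. z \<in> ground X \<and> z \<notin> \<Union>(PI_lines_prod \<alpha> \<beta>)}"

definition PIstar_monoid :: "'a set \<Rightarrow> ('a + 'a) set set monoid" where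
  "PIstar_monoid X = \<lparr>carrier = PIstar X, mult = PI_prod X,
      one = {{Inl x, Inr x} | x. x \<in> X}\<rparr>"

end

theory Submission
  imports Defs
begin


definition NE :: "'a set \<Rightarrow> 'a set set" where "NE X = {A. A \<noteq> {} \<and> A \<subseteq> X}"

definition lvalid :: "'a set \<Rightarrow> ('a set \<times> 'a set) set \<Rightarrow> bool" where
  "lvalid X L \<longleftrightarrow> (\<forall>p\<in>L. fst p \<in> NE X \<and> snd p \<in> NE X) \<and>
     (\<forall>p\<in>L. \<forall>q\<in>L. (fst p \<inter> fst q \<noteq> {} \<or> snd p \<inter> snd q \<noteq> {}) \<longrightarrow> p = q)"

definition lcomp :: "('a set \<times> 'a set) set \<Rightarrow> ('a set \<times> 'a set) set \<Rightarrow> ('a set \<times> 'a set) set" where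
  "lcomp L M = {(A,D). \<exists>B. (A,B) \<in> L \<and> (B,D) \<in> M}"

definition lnp :: "'a set \<times> 'a set \<Rightarrow> ('a + 'a) set" where
  "lnp p = Inl ` fst p \<union> Inr ` snd p"

definition lines :: "('a + 'a) set set \<Rightarrow> ('a set \<times> 'a set) set" where
  "lines P = {p. lnp p \<in> P \<and> fst p \<noteq> {} \<and> snd p \<noteq> {}}"

definition enc :: "'a set \<Rightarrow> ('a set \<times> 'a set) set \<Rightarrow> ('a + 'a) set set" where
  "enc X L = lnp ` L \<union> {{z} | z. z \<in> ground X \<and> z \<notin> \<Union>(lnp ` L)}"


lemma lnp_inj: "lnp p = lnp q \<Longrightarrow> p = q"
proof -
  assume h: "lnp p = lnp q"
  have a: "Inl -` lnp p = fst p" "Inr -` lnp p = snd p" for p :: "'a set \<times> 'a set"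
    unfolding lnp_def by auto
  show ?thesis using a[of p] a[of q] h by (metis prod.expand)
qed

lemma lnp_decomp: "Z = lnp (Inl -` Z, Inr -` Z)"
  unfolding lnp_def apply (auto simp: image_iff)
  by (metis sum.exhaust_sel)

lemma gen_line_lnp: "gen_line (lnp p) \<longleftrightarrow> fst p \<noteq> {} \<and> snd p \<noteq> {}"
  unfolding gen_line_def lnp_def by auto

lemma lnp_not_single: "fst p \<noteq> {} \<Longrightarrow> snd p \<noteq> {} \<Longrightarrow> lnp p \<noteq> {z}"
  unfolding lnp_def by (cases z) auto

lemma lnp_sub_ground: "lnp p \<subseteq> ground X \<longleftrightarrow> fst p \<subseteq> X \<and> snd p \<subseteq> X"
  unfolding lnp_def ground_def by auto

lemma lnp_disj: "lnp p \<inter> lnp q = {} \<longleftrightarrow> fst p \<inter> fst q = {} \<and> snd p \<inter> snd q = {}"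
  unfolding lnp_def by auto

lemma lnp_simp: "Inl ` A \<union> Inr ` B = lnp (A,B)"
  unfolding lnp_def by simp

lemma PI_prod_enc: "PI_prod X \<alpha> \<beta> = enc X (lcomp (lines \<alpha>) (lines \<beta>))"
proof -
  have "PI_lines_prod \<alpha> \<beta> = {lnp (A,D) | A B D. lnp (A,B) \<in> \<alpha> \<and> A \<noteq> {} \<and> B \<noteq> {} \<and>
      lnp (B,D) \<in> \<beta> \<and> D \<noteq> {}}"
    unfolding PI_lines_prod_def lnp_simp gen_line_lnp by auto
  also have "\<dots> = lnp ` lcomp (lines \<alpha>) (lines \<beta>)"
    unfolding lcomp_def lines_def by auto
  finally show ?thesis unfolding PI_prod_def enc_def by simp
qed

lemma lines_valid:
  assumes "P \<in> PIstar X" shows "lvalid X (lines P)"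
proof -
  from assms have part: "is_partition_of (ground X) P" unfolding PIstar_def by auto
  then have U: "\<Union>P = ground X" by (simp add: is_partition_of_def)
  have D: "\<And>B C. B \<in> P \<Longrightarrow> C \<in> P \<Longrightarrow> B \<noteq> C \<Longrightarrow> B \<inter> C = {}"
    using part unfolding is_partition_of_def by simp
  have 1: "fst p \<in> NE X \<and> snd p \<in> NE X" if "p \<in> lines P" for p
  proof -
    have "lnp p \<in> P" using that unfolding lines_def by simp
    then have "lnp p \<subseteq> ground X" using U by blast
    then show ?thesis using that unfolding NE_def lines_def lnp_sub_ground by simp
  qed
  have 2: "p = q" if "p \<in> lines P" "q \<in> lines P" "fst p \<inter> fst q \<noteq> {} \<or> snd p \<inter> snd q \<noteq> {}" for p q
  proof (rule ccontr)
    assume "p \<noteq> q"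
    then have "lnp p \<noteq> lnp q" using lnp_inj by blast
    moreover have "lnp p \<in> P" "lnp q \<in> P" using that unfolding lines_def by simp_all
    ultimately have "lnp p \<inter> lnp q = {}" using D by blast
    then show False using that(3) by (simp add: lnp_disj)
  qed
  show ?thesis unfolding lvalid_def using 1 2 by blast
qed

lemma enc_lines:
  assumes "P \<in> PIstar X" shows "enc X (lines P) = P"
proof -
  from assms have part: "is_partition_of (ground X) P" and bl: "\<forall>B\<in>P. (\<exists>z. B = {z}) \<or> gen_line B"
    unfolding PIstar_def by auto
  have ln: "lnp ` lines P = {B\<in>P. gen_line B}"
  proof
    show "lnp ` lines P \<subseteq> {B \<in> P. gen_line B}" unfolding lines_def by (auto simp: gen_line_lnp)
    show "{B \<in> P. gen_line B} \<subseteq> lnp ` lines P"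
    proof
      fix B assume "B \<in> {B \<in> P. gen_line B}"
      then have B: "B \<in> P" "gen_line B" by auto
      let ?p = "(Inl -` B, Inr -` B)"
      have e: "lnp ?p = B" using lnp_decomp[of B] by simp
      then have "?p \<in> lines P" using B gen_line_lnp[of ?p] unfolding lines_def by simp
      then show "B \<in> lnp ` lines P" using e by (metis imageI)
    qed
  qed
  have sg: "\<not> gen_line {z}" for z :: "'a + 'a" unfolding gen_line_def by (cases z) auto
  show ?thesis
  proof
    show "enc X (lines P) \<subseteq> P"
    proof
      fix B assume "B \<in> enc X (lines P)"
      then consider "B \<in> lnp ` lines P" | z where "B = {z}" "z \<in> ground X" "z \<notin> \<Union>(lnp ` lines P)"
        unfolding enc_def by auto
      then show "B \<in> P"
      proof cases
        case 1 then show ?thesis using ln by auto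
      next
        case 2
        have "\<Union>P = ground X" using part by (simp add: is_partition_of_def)
        then obtain C where C: "C \<in> P" "z \<in> C" using 2 by blast
        then have "\<not> gen_line C" using 2 ln by auto
        then show ?thesis using bl C 2 by auto
      qed
    qed
    show "P \<subseteq> enc X (lines P)"
    proof
      fix B assume B: "B \<in> P"
      show "B \<in> enc X (lines P)"
      proof (cases "gen_line B")
        case True then show ?thesis using ln B unfolding enc_def by auto
      next
        case False
        then obtain z where z: "B = {z}" using bl B by auto
        have zg: "z \<in> ground X" using part B z unfolding is_partition_of_def by auto
        have "z \<notin> \<Union>(lnp ` lines P)"
        proof
          assume "z \<in> \<Union>(lnp ` lines P)"
          then obtain C where "C \<in> P" "gen_line C" "z \<in> C" using ln by auto
          then show False using part B z sg unfolding is_partition_of_def by (metis disjoint_iff singletonI)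
        qed
        then show ?thesis using z zg unfolding enc_def by auto
      qed
    qed
  qed
qed

lemma lvalid_NE: "lvalid X L \<Longrightarrow> p \<in> L \<Longrightarrow> fst p \<in> NE X \<and> snd p \<in> NE X"
  unfolding lvalid_def by blast

lemma lvalid_disj: "lvalid X L \<Longrightarrow> p \<in> L \<Longrightarrow> q \<in> L \<Longrightarrow> p \<noteq> q \<Longrightarrow> fst p \<inter> fst q = {} \<and> snd p \<inter> snd q = {}"
  unfolding lvalid_def by blast

lemma lvalid_eq: "lvalid X L \<Longrightarrow> p \<in> L \<Longrightarrow> q \<in> L \<Longrightarrow> fst p \<inter> fst q \<noteq> {} \<or> snd p \<inter> snd q \<noteq> {} \<Longrightarrow> p = q"
  unfolding lvalid_def by blast

lemma enc_PIstar:
  assumes v: "lvalid X L" shows "enc X L \<in> PIstar X"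
proof -
  have sub: "fst p \<subseteq> X" "snd p \<subseteq> X" "fst p \<noteq> {}" "snd p \<noteq> {}" if "p \<in> L" for p
    using lvalid_NE[OF v that] unfolding NE_def by auto
  have dj: "lnp p \<inter> lnp q = {}" if "p \<in> L" "q \<in> L" "p \<noteq> q" for p q
    using lvalid_disj[OF v that] by (simp add: lnp_disj)
  have "is_partition_of (ground X) (enc X L)"
    unfolding is_partition_of_def
  proof (intro conjI ballI impI)
    fix B assume "B \<in> enc X L" then show "B \<noteq> {}"
      unfolding enc_def lnp_def using sub by auto
  next
    show "\<Union>(enc X L) = ground X"
    proof
      show "\<Union>(enc X L) \<subseteq> ground X"
      proof
        fix z assume "z \<in> \<Union>(enc X L)"
        then obtain B where B: "B \<in> enc X L" "z \<in> B" by blast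
        then consider p where "p \<in> L" "B = lnp p" | "B = {z}" "z \<in> ground X"
          unfolding enc_def by blast
        then show "z \<in> ground X"
        proof cases
          case 1 then have "lnp p \<subseteq> ground X" using sub(1,2) by (simp add: lnp_sub_ground)
          then show ?thesis using 1 B by blast
        qed simp
      qed
      show "ground X \<subseteq> \<Union>(enc X L)"
      proof
        fix z assume z: "z \<in> ground X"
        show "z \<in> \<Union>(enc X L)"
        proof (cases "z \<in> \<Union>(lnp ` L)")
          case True then show ?thesis unfolding enc_def by blast
        next
          case False then have "{z} \<in> enc X L" using z unfolding enc_def by blast
          then show ?thesis by blast
        qed
      qed
    qed
  next
    fix B C assume BC: "B \<in> enc X L" "C \<in> enc X L" "B \<noteq> C"
    have B: "(\<exists>p\<in>L. B = lnp p) \<or> (\<exists>z. B = {z} \<and> z \<notin> \<Union>(lnp ` L))"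
      using BC(1) unfolding enc_def by blast
    have C: "(\<exists>p\<in>L. C = lnp p) \<or> (\<exists>z. C = {z} \<and> z \<notin> \<Union>(lnp ` L))"
      using BC(2) unfolding enc_def by blast
    from B C show "B \<inter> C = {}"
    proof (elim disjE bexE exE conjE)
      fix p q assume "p \<in> L" "B = lnp p" "q \<in> L" "C = lnp q"
      then show ?thesis using dj BC(3) by blast
    next
      fix p w assume "p \<in> L" "B = lnp p" "C = {w}" "w \<notin> \<Union>(lnp ` L)"
      then show ?thesis by blast
    next
      fix p w assume "p \<in> L" "C = lnp p" "B = {w}" "w \<notin> \<Union>(lnp ` L)"
      then show ?thesis by blast
    next
      fix z w assume "B = {z}" "C = {w}"
      then show ?thesis using BC(3) by blast
    qed
  qed
  moreover have "\<forall>B\<in>enc X L. (\<exists>z. B = {z}) \<or> gen_line B"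
    unfolding enc_def using sub(3,4) by (auto simp: gen_line_lnp)
  ultimately show ?thesis unfolding PIstar_def by auto
qed

lemma lines_enc:
  assumes v: "lvalid X L" shows "lines (enc X L) = L"
proof
  show "lines (enc X L) \<subseteq> L"
  proof
    fix p assume "p \<in> lines (enc X L)"
    then have p: "lnp p \<in> enc X L" "fst p \<noteq> {}" "snd p \<noteq> {}" unfolding lines_def by auto
    have ns: "lnp p \<noteq> {z}" for z using lnp_not_single[OF p(2,3)] .
    from p(1) ns have "lnp p \<in> lnp ` L" unfolding enc_def by blast
    then show "p \<in> L" using lnp_inj by blast
  qed
  show "L \<subseteq> lines (enc X L)"
  proof
    fix p assume p: "p \<in> L"
    then have "fst p \<noteq> {}" "snd p \<noteq> {}" using lvalid_NE[OF v p] unfolding NE_def by auto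
    moreover have "lnp p \<in> enc X L" using p unfolding enc_def by blast
    ultimately show "p \<in> lines (enc X L)" unfolding lines_def by simp
  qed
qed



definition II :: "'a set \<Rightarrow> ('a set \<times> 'a set) set" where "II A = {(A,A)}"

definition mapL :: "('a \<Rightarrow> 'a) \<Rightarrow> ('a set \<times> 'a set) set \<Rightarrow> ('a set \<times> 'a set) set" where
  "mapL s L = (\<lambda>p. (s ` fst p, s ` snd p)) ` L"

definition isatom :: "'a set \<Rightarrow> ('a set \<times> 'a set) set \<Rightarrow> bool" where
  "isatom X L \<longleftrightarrow> lvalid X L \<and> L \<noteq> {} \<and> lcomp L L = L \<and>
     (\<forall>N. lvalid X N \<and> lcomp N N = N \<and> lcomp N L = N \<longrightarrow> N = {} \<or> N = L)"

lemma lcomp_valid: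
  assumes L: "lvalid X L" and M: "lvalid X M" shows "lvalid X (lcomp L M)"
  unfolding lvalid_def
proof (intro conjI ballI impI)
  fix p assume "p \<in> lcomp L M"
  then obtain A B D where p: "p = (A,D)" "(A,B) \<in> L" "(B,D) \<in> M" unfolding lcomp_def by auto
  show "fst p \<in> NE X" using lvalid_NE[OF L p(2)] p(1) by simp
  show "snd p \<in> NE X" using lvalid_NE[OF M p(3)] p(1) by simp
next
  fix p q assume pq: "p \<in> lcomp L M" "q \<in> lcomp L M" and h: "fst p \<inter> fst q \<noteq> {} \<or> snd p \<inter> snd q \<noteq> {}"
  from pq(1) obtain A B D where p: "p = (A,D)" "(A,B) \<in> L" "(B,D) \<in> M" unfolding lcomp_def by auto
  from pq(2) obtain A' B' D' where q: "q = (A',D')" "(A',B') \<in> L" "(B',D') \<in> M" unfolding lcomp_def by auto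
  have Bne: "B \<noteq> {}" using lvalid_NE[OF M p(3)] unfolding NE_def by simp
  from h show "p = q"
  proof
    assume "fst p \<inter> fst q \<noteq> {}"
    then have "(A,B) = (A',B')" using lvalid_eq[OF L p(2) q(2)] p q by simp
    then have "(B,D) = (B',D')" using lvalid_eq[OF M p(3) q(3)] Bne by simp
    then show ?thesis using p q \<open>(A,B) = (A',B')\<close> by simp
  next
    assume "snd p \<inter> snd q \<noteq> {}"
    then have "(B,D) = (B',D')" using lvalid_eq[OF M p(3) q(3)] p q by simp
    then have "(A,B) = (A',B')" using lvalid_eq[OF L p(2) q(2)] Bne by simp
    then show ?thesis using p q \<open>(B,D) = (B',D')\<close> by simp
  qed
qed

lemma II_valid: "A \<in> NE X \<Longrightarrow> lvalid X (II A)"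
  unfolding lvalid_def II_def by auto

lemma II_inj: "II A = II B \<Longrightarrow> A = B"
  unfolding II_def by auto

lemma lcomp_II_left: "lcomp (II A) L = {p\<in>L. fst p = A}"
  unfolding lcomp_def II_def by auto

lemma lcomp_II_right: "lcomp L (II B) = {p\<in>L. snd p = B}"
  unfolding lcomp_def II_def by auto

lemma lcomp_single_left: "lcomp {(A,A)} L = {p\<in>L. fst p = A}"
  unfolding lcomp_def by auto

lemma lcomp_single_right: "lcomp L {(B,B)} = {p\<in>L. snd p = B}"
  unfolding lcomp_def by auto

lemma lcomp_empty[simp]: "lcomp {} L = {}" "lcomp L {} = {}"
  unfolding lcomp_def by auto

lemma empty_valid[simp]: "lvalid X {}"
  unfolding lvalid_def by auto

lemma idem_diag:
  assumes L: "lvalid X L" and i: "lcomp L L = L" and p: "p \<in> L" shows "fst p = snd p"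
proof -
  obtain A B where pAB: "p = (A,B)" by (cases p)
  from p i pAB obtain C where C: "(A,C) \<in> L" "(C,B) \<in> L" unfolding lcomp_def by blast
  have "A \<noteq> {}" "B \<noteq> {}" using lvalid_NE[OF L p] pAB unfolding NE_def by auto
  then have "(A,C) = (A,B)" using lvalid_eq[OF L C(1) p] pAB by simp
  then have "(C,B) = (B,B)" by simp
  then have "(B,B) \<in> L" using C by simp
  then have "(B,B) = (A,B)" using lvalid_eq[OF L _ p] pAB \<open>B \<noteq> {}\<close> by simp
  then show ?thesis using pAB by simp
qed

lemma II_idem: "lcomp (II A) (II A) = II A"
  unfolding lcomp_def II_def by auto

lemma atom_iff: "isatom X L \<longleftrightarrow> (\<exists>A\<in>NE X. L = II A)"
proof
  assume a: "isatom X L"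
  then have L: "lvalid X L" "L \<noteq> {}" "lcomp L L = L" unfolding isatom_def by auto
  then obtain p where p: "p \<in> L" by auto
  obtain A where pA: "p = (A,A)" using idem_diag[OF L(1) L(3) p] by (metis prod.collapse)
  have ANE: "A \<in> NE X" using lvalid_NE[OF L(1) p] pA by simp
  have "lcomp (II A) L = II A"
  proof -
    have "{q\<in>L. fst q = A} = {(A,A)}"
    proof
      show "{q\<in>L. fst q = A} \<subseteq> {(A,A)}"
      proof
        fix q assume q: "q \<in> {q\<in>L. fst q = A}"
        then have "fst q = snd q" using idem_diag[OF L(1) L(3)] by blast
        then show "q \<in> {(A,A)}" using q by (metis (mono_tags, lifting) mem_Collect_eq prod.collapse singletonI)
      qed
      show "{(A,A)} \<subseteq> {q\<in>L. fst q = A}" using p pA by simp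
    qed
    then show ?thesis unfolding lcomp_II_left by (simp add: II_def)
  qed
  moreover have m: "\<forall>N. lvalid X N \<and> lcomp N N = N \<and> lcomp N L = N \<longrightarrow> N = {} \<or> N = L"
    using a unfolding isatom_def by blast
  ultimately have "II A = {} \<or> II A = L" using II_valid[OF ANE] II_idem by blast
  then show "\<exists>A\<in>NE X. L = II A" using ANE unfolding II_def by auto
next
  assume "\<exists>A\<in>NE X. L = II A"
  then obtain A where A: "A \<in> NE X" "L = II A" by auto
  have "N = {} \<or> N = L" if N: "lvalid X N" "lcomp N N = N" "lcomp N L = N" for N
  proof -
    have "N \<subseteq> {(A,A)}"
    proof
      fix q assume q: "q \<in> N"
      then have "q \<in> lcomp N (II A)" using N(3) A(2) by simp
      then have "snd q = A" by (simp add: lcomp_II_right)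
      moreover have "fst q = snd q" using idem_diag[OF N(1) N(2) q] .
      ultimately show "q \<in> {(A,A)}" by (metis prod.collapse singletonI)
    qed
    then show ?thesis using A(2) unfolding II_def by auto
  qed
  moreover have "lvalid X L" using II_valid[OF A(1)] A(2) by simp
  moreover have "L \<noteq> {}" using A(2) by (simp add: II_def)
  moreover have "lcomp L L = L" using II_idem A(2) by simp
  ultimately show "isatom X L" unfolding isatom_def by blast
qed

lemma compat_iff:
  assumes A: "A \<in> NE X" and B: "B \<in> NE X"
  shows "(\<exists>N. lvalid X N \<and> lcomp (II A) N = II A \<and> lcomp (II B) N = II B) \<longleftrightarrow> (A \<inter> B = {} \<or> A = B)"
proof
  assume "\<exists>N. lvalid X N \<and> lcomp (II A) N = II A \<and> lcomp (II B) N = II B"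
  then obtain N where N: "lvalid X N" "lcomp (II A) N = II A" "lcomp (II B) N = II B" by auto
  have "(A,A) \<in> lcomp (II A) N" using N(2) by (simp add: II_def)
  then have "(A,A) \<in> N" by (simp add: lcomp_II_left)
  moreover have "(B,B) \<in> lcomp (II B) N" using N(3) by (simp add: II_def)
  then have "(B,B) \<in> N" by (simp add: lcomp_II_left)
  ultimately have "A \<inter> B \<noteq> {} \<Longrightarrow> (A,A) = (B,B)" using lvalid_eq[OF N(1)] by (metis fst_conv)
  then show "A \<inter> B = {} \<or> A = B" by auto
next
  assume h: "A \<inter> B = {} \<or> A = B"
  let ?N = "{(A,A),(B,B)}"
  have v: "lvalid X ?N" using A B h unfolding lvalid_def by auto
  have "lcomp (II A) ?N = II A" "lcomp (II B) ?N = II B"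
    using h A B unfolding II_def NE_def lcomp_single_left by auto
  then show "\<exists>N. lvalid X N \<and> lcomp (II A) N = II A \<and> lcomp (II B) N = II B" using v by blast
qed

lemma mem_iff: "(A,B) \<in> L \<longleftrightarrow> lcomp (II A) (lcomp L (II B)) \<noteq> {}"
  unfolding lcomp_II_left lcomp_II_right by auto



locale lauto =
  fixes X :: "'a set" and \<psi> :: "('a set \<times> 'a set) set \<Rightarrow> ('a set \<times> 'a set) set"
  assumes bij: "bij_betw \<psi> {L. lvalid X L} {L. lvalid X L}"
    and hom: "\<And>L M. lvalid X L \<Longrightarrow> lvalid X M \<Longrightarrow> \<psi> (lcomp L M) = lcomp (\<psi> L) (\<psi> M)"
begin

lemma valid: "lvalid X L \<Longrightarrow> lvalid X (\<psi> L)"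
  using bij unfolding bij_betw_def by auto

lemma inj: "lvalid X L \<Longrightarrow> lvalid X M \<Longrightarrow> \<psi> L = \<psi> M \<Longrightarrow> L = M"
  using bij unfolding bij_betw_def inj_on_def by auto

lemma surj: "lvalid X N \<Longrightarrow> \<exists>L. lvalid X L \<and> \<psi> L = N"
  using bij unfolding bij_betw_def by (metis (no_types, lifting) imageE mem_Collect_eq)

lemma zero: "\<psi> {} = {}"
proof -
  obtain M where M: "lvalid X M" "\<psi> M = {}" using surj[of "{}"] by auto
  have "\<psi> {} = \<psi> (lcomp {} M)" by simp
  also have "\<dots> = lcomp (\<psi> {}) (\<psi> M)" using hom[OF empty_valid M(1)] .
  finally show ?thesis using M(2) by simp
qed

lemma nz: "lvalid X L \<Longrightarrow> \<psi> L = {} \<longleftrightarrow> L = {}"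
  using inj[OF _ empty_valid] zero by auto

lemma atom: assumes a: "isatom X L" shows "isatom X (\<psi> L)"
proof -
  have L: "lvalid X L" "L \<noteq> {}" "lcomp L L = L"
    and m: "\<And>N. lvalid X N \<Longrightarrow> lcomp N N = N \<Longrightarrow> lcomp N L = N \<Longrightarrow> N = {} \<or> N = L"
    using a unfolding isatom_def by auto
  have "N = {} \<or> N = \<psi> L" if N: "lvalid X N" "lcomp N N = N" "lcomp N (\<psi> L) = N" for N
  proof -
    obtain M where M: "lvalid X M" "\<psi> M = N" using surj[OF N(1)] by auto
    have "\<psi> (lcomp M M) = \<psi> M" using hom[OF M(1) M(1)] M(2) N(2) by simp
    then have 1: "lcomp M M = M" using inj lcomp_valid M(1) by blast
    have "\<psi> (lcomp M L) = \<psi> M" using hom[OF M(1) L(1)] M(2) N(3) by simp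
    then have 2: "lcomp M L = M" using inj lcomp_valid M(1) L(1) by blast
    from m[OF M(1) 1 2] show ?thesis using zero M(2) by auto
  qed
  moreover have "\<psi> L \<noteq> {}" using nz L by simp
  moreover have "lcomp (\<psi> L) (\<psi> L) = \<psi> L" using hom[OF L(1) L(1)] L(3) by simp
  ultimately show ?thesis unfolding isatom_def using valid L(1) by blast
qed

lemma II_img: assumes "A \<in> NE X" shows "\<exists>B\<in>NE X. \<psi> (II A) = II B"
proof -
  have "isatom X (II A)" using assms atom_iff by blast
  then have "isatom X (\<psi> (II A))" by (rule atom)
  then show ?thesis using atom_iff by blast
qed

lemma disj:
  assumes A: "A \<in> NE X" and B: "B \<in> NE X" and AB: "A \<inter> B = {}"
    and A': "A' \<in> NE X" and B': "B' \<in> NE X" and iA: "\<psi> (II A) = II A'" and iB: "\<psi> (II B) = II B'"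
  shows "A' \<inter> B' = {}"
proof -
  obtain N where N: "lvalid X N" "lcomp (II A) N = II A" "lcomp (II B) N = II B"
    using compat_iff[OF A B] AB by blast
  have "lcomp (II A') (\<psi> N) = II A'" using hom[OF II_valid[OF A] N(1)] N(2) iA by simp
  moreover have "lcomp (II B') (\<psi> N) = II B'" using hom[OF II_valid[OF B] N(1)] N(3) iB by simp
  ultimately have "A' \<inter> B' = {} \<or> A' = B'" using compat_iff[OF A' B'] valid[OF N(1)] by blast
  moreover have "A \<noteq> B" using AB A unfolding NE_def by auto
  then have "A' \<noteq> B'" using inj[OF II_valid[OF A] II_valid[OF B]] iA iB II_inj by metis
  ultimately show ?thesis by blast
qed

end

lemma lauto_inv:
  assumes "lauto X \<psi>" shows "lauto X (inv_into {L. lvalid X L} \<psi>)"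
proof -
  interpret lauto X \<psi> by fact
  let ?S = "{L. lvalid X L}"
  show ?thesis
  proof
    show "bij_betw (inv_into ?S \<psi>) ?S ?S" using bij by (rule bij_betw_inv_into)
    fix L M assume L: "lvalid X L" and M: "lvalid X M"
    obtain L' where L': "lvalid X L'" "\<psi> L' = L" using surj[OF L] by auto
    obtain M' where M': "lvalid X M'" "\<psi> M' = M" using surj[OF M] by auto
    have il: "inv_into ?S \<psi> (\<psi> K) = K" if "lvalid X K" for K
      using bij that by (simp add: bij_betw_inv_into_left)
    have "inv_into ?S \<psi> (lcomp L M) = inv_into ?S \<psi> (\<psi> (lcomp L' M'))"
      using hom[OF L'(1) M'(1)] L'(2) M'(2) by simp
    also have "\<dots> = lcomp L' M'" using il lcomp_valid[OF L'(1) M'(1)] by simp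
    moreover have "inv_into ?S \<psi> L = L'" using il L' by metis
    moreover have "inv_into ?S \<psi> M = M'" using il M' by metis
    ultimately show "inv_into ?S \<psi> (lcomp L M) = lcomp (inv_into ?S \<psi> L) (inv_into ?S \<psi> M)"
      by simp
  qed
qed



lemma mono_lemma:
  assumes fN: "\<And>A. A \<in> NE X \<Longrightarrow> f A \<in> NE X" and gN: "\<And>A. A \<in> NE X \<Longrightarrow> g A \<in> NE X"
    and gf: "\<And>A. A \<in> NE X \<Longrightarrow> g (f A) = A"
    and fd: "\<And>A B. A \<in> NE X \<Longrightarrow> B \<in> NE X \<Longrightarrow> A \<inter> B = {} \<Longrightarrow> f A \<inter> f B = {}"
    and gd: "\<And>A B. A \<in> NE X \<Longrightarrow> B \<in> NE X \<Longrightarrow> A \<inter> B = {} \<Longrightarrow> g A \<inter> g B = {}"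
    and fg: "\<And>A. A \<in> NE X \<Longrightarrow> f (g A) = A"
    and A: "A \<in> NE X" and B: "B \<in> NE X" and AB: "A \<subseteq> B"
  shows "f A \<subseteq> f B"
proof
  fix y assume y: "y \<in> f A"
  show "y \<in> f B"
  proof (rule ccontr)
    assume ny: "y \<notin> f B"
    have yN: "{y} \<in> NE X" using fN[OF A] y unfolding NE_def by auto
    have "{y} \<inter> f B = {}" using ny by auto
    then have "g {y} \<inter> g (f B) = {}" using gd[OF yN fN[OF B]] by simp
    then have "g {y} \<inter> A = {}" using gf[OF B] AB by auto
    then have "f (g {y}) \<inter> f A = {}" using fd[OF gN[OF yN] A] by simp
    then show False using fg[OF yN] y by auto
  qed
qed

lemma sing_lemma:
  assumes fN: "\<And>A. A \<in> NE X \<Longrightarrow> f A \<in> NE X" and gN: "\<And>A. A \<in> NE X \<Longrightarrow> g A \<in> NE X"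
    and gf: "\<And>A. A \<in> NE X \<Longrightarrow> g (f A) = A"
    and fg: "\<And>A. A \<in> NE X \<Longrightarrow> f (g A) = A"
    and gm: "\<And>A B. A \<in> NE X \<Longrightarrow> B \<in> NE X \<Longrightarrow> A \<subseteq> B \<Longrightarrow> g A \<subseteq> g B"
    and x: "x \<in> X"
  shows "\<exists>y\<in>X. f {x} = {y}"
proof -
  have xN: "{x} \<in> NE X" using x unfolding NE_def by auto
  then have fx: "f {x} \<in> NE X" by (rule fN)
  then obtain y where y: "y \<in> f {x}" unfolding NE_def by auto
  have yX: "y \<in> X" using fx y unfolding NE_def by auto
  then have yN: "{y} \<in> NE X" unfolding NE_def by auto
  have "g {y} \<subseteq> g (f {x})" using gm[OF yN fx] y by auto
  then have "g {y} \<subseteq> {x}" using gf[OF xN] by simp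
  moreover have "g {y} \<noteq> {}" using gN[OF yN] unfolding NE_def by auto
  ultimately have "g {y} = {x}" by auto
  then have "f {x} = {y}" using fg[OF yN] by metis
  then show ?thesis using yX by auto
qed

context lauto
begin

lemma main: "\<exists>\<sigma>. \<sigma> \<in> Bij X \<and> (\<forall>L. lvalid X L \<longrightarrow> \<psi> L = mapL \<sigma> L)"
proof -
  let ?S = "{L. lvalid X L}"
  let ?\<psi>' = "inv_into ?S \<psi>"
  interpret iv: lauto X ?\<psi>' using lauto_inv lauto_axioms by blast
  have il: "?\<psi>' (\<psi> K) = K" if "lvalid X K" for K
    using bij that by (simp add: bij_betw_inv_into_left)
  have ir: "\<psi> (?\<psi>' K) = K" if "lvalid X K" for K
    using bij that by (simp add: bij_betw_inv_into_right)
  have "\<forall>A\<in>NE X. \<exists>B. B \<in> NE X \<and> \<psi> (II A) = II B" using II_img by blast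
  then obtain f where f: "\<And>A. A \<in> NE X \<Longrightarrow> f A \<in> NE X \<and> \<psi> (II A) = II (f A)" by metis
  have "\<forall>A\<in>NE X. \<exists>B. B \<in> NE X \<and> ?\<psi>' (II A) = II B" using iv.II_img by blast
  then obtain g where g: "\<And>A. A \<in> NE X \<Longrightarrow> g A \<in> NE X \<and> ?\<psi>' (II A) = II (g A)" by metis
  have fN: "\<And>A. A \<in> NE X \<Longrightarrow> f A \<in> NE X" using f by blast
  have gN: "\<And>A. A \<in> NE X \<Longrightarrow> g A \<in> NE X" using g by blast
  have gf: "g (f A) = A" if A: "A \<in> NE X" for A
  proof -
    have "II (g (f A)) = ?\<psi>' (II (f A))" using g[OF fN[OF A]] by simp
    also have "\<dots> = ?\<psi>' (\<psi> (II A))" using f[OF A] by simp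
    also have "\<dots> = II A" using il II_valid[OF A] by simp
    finally show ?thesis by (rule II_inj)
  qed
  have fg: "f (g A) = A" if A: "A \<in> NE X" for A
  proof -
    have "II (f (g A)) = \<psi> (II (g A))" using f[OF gN[OF A]] by simp
    also have "\<dots> = \<psi> (?\<psi>' (II A))" using g[OF A] by simp
    also have "\<dots> = II A" using ir II_valid[OF A] by simp
    finally show ?thesis by (rule II_inj)
  qed
  have fd: "f A \<inter> f B = {}" if "A \<in> NE X" "B \<in> NE X" "A \<inter> B = {}" for A B
    using disj[OF that fN[OF that(1)] fN[OF that(2)]] f[OF that(1)] f[OF that(2)] by simp
  have gd: "g A \<inter> g B = {}" if "A \<in> NE X" "B \<in> NE X" "A \<inter> B = {}" for A B
    using iv.disj[OF that gN[OF that(1)] gN[OF that(2)]] g[OF that(1)] g[OF that(2)] by simp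
  have fm: "\<And>A B. A \<in> NE X \<Longrightarrow> B \<in> NE X \<Longrightarrow> A \<subseteq> B \<Longrightarrow> f A \<subseteq> f B"
    using mono_lemma[of X f g, OF fN gN gf fd gd fg] by blast
  have gm: "\<And>A B. A \<in> NE X \<Longrightarrow> B \<in> NE X \<Longrightarrow> A \<subseteq> B \<Longrightarrow> g A \<subseteq> g B"
    using mono_lemma[of X g f, OF gN fN fg gd fd gf] by blast
  have fs: "\<And>x. x \<in> X \<Longrightarrow> \<exists>y\<in>X. f {x} = {y}"
    using sing_lemma[of X f g, OF fN gN gf fg gm] by blast
  have gs: "\<And>x. x \<in> X \<Longrightarrow> \<exists>y\<in>X. g {x} = {y}"
    using sing_lemma[of X g f, OF gN fN fg gf fm] by blast
  define \<sigma> where "\<sigma> = restrict (\<lambda>x. the_elem (f {x})) X"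
  define \<tau> where "\<tau> = restrict (\<lambda>x. the_elem (g {x})) X"
  have f\<sigma>: "f {x} = {\<sigma> x} \<and> \<sigma> x \<in> X" if xX: "x \<in> X" for x
  proof -
    obtain y where y: "y \<in> X" "f {x} = {y}" using fs[OF xX] by blast
    then have "\<sigma> x = y" using xX unfolding \<sigma>_def by simp
    then show ?thesis using y by simp
  qed
  have g\<tau>: "g {x} = {\<tau> x} \<and> \<tau> x \<in> X" if xX: "x \<in> X" for x
  proof -
    obtain y where y: "y \<in> X" "g {x} = {y}" using gs[OF xX] by blast
    then have "\<tau> x = y" using xX unfolding \<tau>_def by simp
    then show ?thesis using y by simp
  qed
  have xN: "\<And>x. x \<in> X \<Longrightarrow> {x} \<in> NE X" unfolding NE_def by auto
  have \<sigma>\<tau>: "\<sigma> (\<tau> y) = y" if y: "y \<in> X" for y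
  proof -
    have "{\<sigma> (\<tau> y)} = f {\<tau> y}" using f\<sigma> g\<tau> y by metis
    also have "\<dots> = f (g {y})" using g\<tau> y by metis
    also have "\<dots> = {y}" using fg xN y by metis
    finally show ?thesis by simp
  qed
  have \<tau>\<sigma>: "\<tau> (\<sigma> x) = x" if x: "x \<in> X" for x
  proof -
    have "{\<tau> (\<sigma> x)} = g {\<sigma> x}" using f\<sigma> g\<tau> x by metis
    also have "\<dots> = g (f {x})" using f\<sigma> x by metis
    also have "\<dots> = {x}" using gf xN x by metis
    finally show ?thesis by simp
  qed
  have bij\<sigma>: "bij_betw \<sigma> X X"
    by (rule bij_betw_byWitness[of X \<tau>]) (use \<tau>\<sigma> \<sigma>\<tau> f\<sigma> g\<tau> in auto)
  have \<sigma>Bij: "\<sigma> \<in> Bij X" unfolding Bij_def using bij\<sigma> unfolding \<sigma>_def by simp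
  have fimg: "f A = \<sigma> ` A" if A: "A \<in> NE X" for A
  proof
    show "\<sigma> ` A \<subseteq> f A"
    proof
      fix y assume "y \<in> \<sigma> ` A"
      then obtain x where x: "x \<in> A" "y = \<sigma> x" by auto
      have xX: "x \<in> X" using A x unfolding NE_def by auto
      have "f {x} \<subseteq> f A" using fm[OF xN[OF xX] A] x by auto
      then show "y \<in> f A" using f\<sigma>[OF xX] x by auto
    qed
    show "f A \<subseteq> \<sigma> ` A"
    proof
      fix y assume y: "y \<in> f A"
      have yX: "y \<in> X" using fN[OF A] y unfolding NE_def by auto
      have "g {y} \<subseteq> g (f A)" using gm[OF xN[OF yX] fN[OF A]] y by auto
      then have "\<tau> y \<in> A" using g\<tau>[OF yX] gf[OF A] by auto
      then show "y \<in> \<sigma> ` A" using \<sigma>\<tau>[OF yX] by (metis imageI)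
    qed
  qed
  have key: "(A,B) \<in> L \<longleftrightarrow> (f A, f B) \<in> \<psi> L" if L: "lvalid X L" and A: "A \<in> NE X" and B: "B \<in> NE X" for L A B
  proof -
    have v: "lvalid X (lcomp (II A) (lcomp L (II B)))"
      using lcomp_valid II_valid A B L by blast
    have "\<psi> (lcomp (II A) (lcomp L (II B))) = lcomp (II (f A)) (lcomp (\<psi> L) (II (f B)))"
    proof -
      have vA: "lvalid X (II A)" and vB: "lvalid X (II B)" using II_valid A B by blast+
      have vLB: "lvalid X (lcomp L (II B))" using lcomp_valid[OF L vB] .
      have "\<psi> (lcomp (II A) (lcomp L (II B))) = lcomp (\<psi> (II A)) (\<psi> (lcomp L (II B)))"
        using hom[OF vA vLB] .
      also have "\<dots> = lcomp (\<psi> (II A)) (lcomp (\<psi> L) (\<psi> (II B)))" using hom[OF L vB] by simp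
      finally show ?thesis using f[OF A] f[OF B] by simp
    qed
    then show ?thesis using mem_iff nz[OF v] by metis
  qed
  have "\<psi> L = mapL \<sigma> L" if L: "lvalid X L" for L
  proof
    show "\<psi> L \<subseteq> mapL \<sigma> L"
    proof
      fix q assume q: "q \<in> \<psi> L"
      obtain C D where CD: "q = (C,D)" by (cases q)
      have CN: "C \<in> NE X" and DN: "D \<in> NE X" using lvalid_NE[OF valid[OF L] q] CD by auto
      have "(f (g C), f (g D)) \<in> \<psi> L" using q CD fg CN DN by simp
      then have "(g C, g D) \<in> L" using key[OF L gN[OF CN] gN[OF DN]] by simp
      moreover have "q = (\<sigma> ` g C, \<sigma> ` g D)" using CD fimg gN CN DN fg by metis
      ultimately show "q \<in> mapL \<sigma> L" unfolding mapL_def by force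
    qed
    show "mapL \<sigma> L \<subseteq> \<psi> L"
    proof
      fix q assume "q \<in> mapL \<sigma> L"
      then obtain A B where p: "(A,B) \<in> L" "q = (\<sigma> ` A, \<sigma> ` B)" unfolding mapL_def by force
      have AN: "A \<in> NE X" and BN: "B \<in> NE X" using lvalid_NE[OF L p(1)] by auto
      show "q \<in> \<psi> L" using key[OF L AN BN] p fimg AN BN by simp
    qed
  qed
  then show ?thesis using \<sigma>Bij by blast
qed

end



lemma mapL_valid:
  assumes s: "bij_betw \<sigma> X X" and L: "lvalid X L" shows "lvalid X (mapL \<sigma> L)"
  unfolding lvalid_def
proof (intro conjI ballI impI)
  fix p assume "p \<in> mapL \<sigma> L"
  then obtain A B where p: "(A,B) \<in> L" "p = (\<sigma> ` A, \<sigma> ` B)" unfolding mapL_def by force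
  have "A \<in> NE X" "B \<in> NE X" using lvalid_NE[OF L p(1)] by auto
  then show "fst p \<in> NE X" "snd p \<in> NE X" using p(2) s unfolding NE_def bij_betw_def by auto
next
  fix p q assume pq: "p \<in> mapL \<sigma> L" "q \<in> mapL \<sigma> L" and h: "fst p \<inter> fst q \<noteq> {} \<or> snd p \<inter> snd q \<noteq> {}"
  from pq(1) obtain A B where p: "(A,B) \<in> L" "p = (\<sigma> ` A, \<sigma> ` B)" unfolding mapL_def by force
  from pq(2) obtain C D where q: "(C,D) \<in> L" "q = (\<sigma> ` C, \<sigma> ` D)" unfolding mapL_def by force
  have sub: "A \<subseteq> X" "B \<subseteq> X" "C \<subseteq> X" "D \<subseteq> X"
    using lvalid_NE[OF L p(1)] lvalid_NE[OF L q(1)] unfolding NE_def by auto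
  have inj: "inj_on \<sigma> X" using s unfolding bij_betw_def by simp
  have "\<sigma> ` A \<inter> \<sigma> ` C = \<sigma> ` (A \<inter> C)" "\<sigma> ` B \<inter> \<sigma> ` D = \<sigma> ` (B \<inter> D)"
    using inj_on_image_Int[OF inj] sub by auto
  then have "A \<inter> C \<noteq> {} \<or> B \<inter> D \<noteq> {}" using h p(2) q(2) by auto
  then have "(A,B) = (C,D)" using lvalid_eq[OF L p(1) q(1)] by simp
  then show "p = q" using p q by simp
qed

lemma mapL_mem: "(A,B) \<in> L \<Longrightarrow> (\<sigma> ` A, \<sigma> ` B) \<in> mapL \<sigma> L"
  unfolding mapL_def by (metis (no_types, lifting) fst_conv image_eqI snd_conv)

lemma mapL_memE: "q \<in> mapL \<sigma> L \<Longrightarrow> \<exists>A B. (A,B) \<in> L \<and> q = (\<sigma> ` A, \<sigma> ` B)"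
  unfolding mapL_def by (metis (no_types, lifting) image_iff prod.collapse)

lemma lcomp_mem: "(A,D) \<in> lcomp L M \<longleftrightarrow> (\<exists>B. (A,B) \<in> L \<and> (B,D) \<in> M)"
  unfolding lcomp_def by simp

lemma lcomp_memE: "q \<in> lcomp L M \<Longrightarrow> \<exists>A B D. q = (A,D) \<and> (A,B) \<in> L \<and> (B,D) \<in> M"
  unfolding lcomp_def by auto

lemma mapL_comp:
  assumes s: "bij_betw \<sigma> X X" and L: "lvalid X L" and M: "lvalid X M"
  shows "mapL \<sigma> (lcomp L M) = lcomp (mapL \<sigma> L) (mapL \<sigma> M)"
proof
  show "mapL \<sigma> (lcomp L M) \<subseteq> lcomp (mapL \<sigma> L) (mapL \<sigma> M)"
  proof
    fix q assume "q \<in> mapL \<sigma> (lcomp L M)"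
    then obtain A D where q: "(A,D) \<in> lcomp L M" "q = (\<sigma> ` A, \<sigma> ` D)" using mapL_memE by blast
    then obtain B where B: "(A,B) \<in> L" "(B,D) \<in> M" using lcomp_mem by blast
    have "(\<sigma> ` A, \<sigma> ` B) \<in> mapL \<sigma> L" "(\<sigma> ` B, \<sigma> ` D) \<in> mapL \<sigma> M" using mapL_mem B by auto
    then show "q \<in> lcomp (mapL \<sigma> L) (mapL \<sigma> M)" using q(2) lcomp_mem by blast
  qed
  show "lcomp (mapL \<sigma> L) (mapL \<sigma> M) \<subseteq> mapL \<sigma> (lcomp L M)"
  proof
    fix q assume "q \<in> lcomp (mapL \<sigma> L) (mapL \<sigma> M)"
    then obtain A1 B1 D1 where q: "q = (A1,D1)" "(A1,B1) \<in> mapL \<sigma> L" "(B1,D1) \<in> mapL \<sigma> M"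
      using lcomp_memE by blast
    obtain A B where AB: "(A,B) \<in> L" "(A1,B1) = (\<sigma> ` A, \<sigma> ` B)" using mapL_memE[OF q(2)] by blast
    obtain B' D where BD: "(B',D) \<in> M" "(B1,D1) = (\<sigma> ` B', \<sigma> ` D)" using mapL_memE[OF q(3)] by blast
    have "B \<subseteq> X" "B' \<subseteq> X" using lvalid_NE[OF L AB(1)] lvalid_NE[OF M BD(1)] unfolding NE_def by auto
    moreover have "\<sigma> ` B = \<sigma> ` B'" using AB(2) BD(2) by simp
    ultimately have "B = B'" using inj_on_image_eq_iff[of \<sigma> X] s unfolding bij_betw_def by blast
    then have "(A,D) \<in> lcomp L M" using AB(1) BD(1) lcomp_mem by blast
    then have "(\<sigma> ` A, \<sigma> ` D) \<in> mapL \<sigma> (lcomp L M)" by (rule mapL_mem)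
    then show "q \<in> mapL \<sigma> (lcomp L M)" using q(1) AB(2) BD(2) by simp
  qed
qed

lemma mapL_cong:
  assumes "\<And>A B. (A,B) \<in> L \<Longrightarrow> \<sigma> ` A = \<tau> ` A \<and> \<sigma> ` B = \<tau> ` B"
  shows "mapL \<sigma> L = mapL \<tau> L"
  unfolding mapL_def
proof (rule image_cong[OF refl])
  fix p assume p: "p \<in> L"
  obtain A B where "p = (A,B)" by (cases p)
  then show "(\<sigma> ` fst p, \<sigma> ` snd p) = (\<tau> ` fst p, \<tau> ` snd p)" using assms p by simp
qed

lemma mapL_mapL:
  assumes L: "lvalid X L" shows "mapL \<sigma> (mapL \<tau> L) = mapL (compose X \<sigma> \<tau>) L"
proof -
  have e: "\<sigma> ` (\<tau> ` A) = compose X \<sigma> \<tau> ` A" if "A \<subseteq> X" for A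
    using that unfolding compose_def by (auto simp: image_iff)
  have "mapL \<sigma> (mapL \<tau> L) = mapL (\<sigma> \<circ> \<tau>) L"
    unfolding mapL_def image_image by (simp add: image_comp)
  also have "\<dots> = mapL (compose X \<sigma> \<tau>) L"
  proof (rule mapL_cong)
    fix A B assume "(A,B) \<in> L"
    then have "A \<subseteq> X" "B \<subseteq> X" using lvalid_NE[OF L] unfolding NE_def by fastforce+
    then show "(\<sigma> \<circ> \<tau>) ` A = compose X \<sigma> \<tau> ` A \<and> (\<sigma> \<circ> \<tau>) ` B = compose X \<sigma> \<tau> ` B"
      using e by (simp add: image_comp)
  qed
  finally show ?thesis .
qed

lemma mapL_id:
  assumes L: "lvalid X L" shows "mapL (\<lambda>x\<in>X. x) L = L"
proof -
  have "mapL (\<lambda>x\<in>X. x) L = mapL id L"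
  proof (rule mapL_cong)
    fix A B assume "(A,B) \<in> L"
    then have "A \<subseteq> X" "B \<subseteq> X" using lvalid_NE[OF L] unfolding NE_def by fastforce+
    then show "(\<lambda>x\<in>X. x) ` A = id ` A \<and> (\<lambda>x\<in>X. x) ` B = id ` B" by auto
  qed
  also have "\<dots> = L" unfolding mapL_def by simp
  finally show ?thesis .
qed

definition Phi :: "'a set \<Rightarrow> ('a \<Rightarrow> 'a) \<Rightarrow> ('a + 'a) set set \<Rightarrow> ('a + 'a) set set" where
  "Phi X \<sigma> = restrict (\<lambda>P. enc X (mapL \<sigma> (lines P))) (PIstar X)"

lemma Bij_bij: "\<sigma> \<in> Bij X \<Longrightarrow> bij_betw \<sigma> X X"
  unfolding Bij_def by simp

lemma Phi_in:
  assumes s: "\<sigma> \<in> Bij X" and P: "P \<in> PIstar X"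
  shows "Phi X \<sigma> P \<in> PIstar X" "lines (Phi X \<sigma> P) = mapL \<sigma> (lines P)"
proof -
  have v: "lvalid X (mapL \<sigma> (lines P))" using mapL_valid[OF Bij_bij[OF s] lines_valid[OF P]] .
  show "Phi X \<sigma> P \<in> PIstar X" using enc_PIstar[OF v] P unfolding Phi_def by simp
  show "lines (Phi X \<sigma> P) = mapL \<sigma> (lines P)" using lines_enc[OF v] P unfolding Phi_def by simp
qed

lemma Phi_comp:
  assumes s: "\<sigma> \<in> Bij X" and t: "\<tau> \<in> Bij X" and P: "P \<in> PIstar X"
  shows "Phi X \<sigma> (Phi X \<tau> P) = Phi X (compose X \<sigma> \<tau>) P"
  using Phi_in[OF t P] P mapL_mapL[OF lines_valid[OF P]] unfolding Phi_def by simp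

lemma Phi_id:
  assumes P: "P \<in> PIstar X" shows "Phi X (\<lambda>x\<in>X. x) P = P"
  using P mapL_id[OF lines_valid[OF P]] enc_lines[OF P] unfolding Phi_def by simp

lemma PI_prod_in:
  assumes P: "P \<in> PIstar X" and Q: "Q \<in> PIstar X" shows "PI_prod X P Q \<in> PIstar X"
  unfolding PI_prod_enc using enc_PIstar lcomp_valid lines_valid P Q by blast

lemma Phi_prod:
  assumes s: "\<sigma> \<in> Bij X" and P: "P \<in> PIstar X" and Q: "Q \<in> PIstar X"
  shows "Phi X \<sigma> (PI_prod X P Q) = PI_prod X (Phi X \<sigma> P) (Phi X \<sigma> Q)"
proof -
  have v: "lvalid X (lcomp (lines P) (lines Q))" using lcomp_valid lines_valid P Q by blast
  have "Phi X \<sigma> (PI_prod X P Q) = enc X (mapL \<sigma> (lcomp (lines P) (lines Q)))"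
    using PI_prod_in[OF P Q] lines_enc[OF v] unfolding Phi_def PI_prod_enc by simp
  also have "\<dots> = enc X (lcomp (mapL \<sigma> (lines P)) (mapL \<sigma> (lines Q)))"
    using mapL_comp[OF Bij_bij[OF s] lines_valid[OF P] lines_valid[OF Q]] by simp
  also have "\<dots> = PI_prod X (Phi X \<sigma> P) (Phi X \<sigma> Q)"
    unfolding PI_prod_enc using Phi_in[OF s P] Phi_in[OF s Q] by simp
  finally show ?thesis .
qed

lemma compose_right_inv:
  assumes s: "\<sigma> \<in> Bij X" shows "compose X \<sigma> (restrict (inv_into X \<sigma>) X) = (\<lambda>x\<in>X. x)"
proof -
  have b: "bij_betw \<sigma> X X" using Bij_bij[OF s] .
  have "\<sigma> (inv_into X \<sigma> x) = x" if "x \<in> X" for x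
    using b that by (simp add: bij_betw_inv_into_right)
  then show ?thesis unfolding compose_def by (auto intro: restrict_ext)
qed

lemma Phi_auto:
  assumes s: "\<sigma> \<in> Bij X" shows "Phi X \<sigma> \<in> auto (PIstar_monoid X)"
proof -
  let ?t = "restrict (inv_into X \<sigma>) X"
  have t: "?t \<in> Bij X" using restrict_inv_into_Bij[OF s] by simp
  have h: "Phi X \<sigma> \<in> hom (PIstar_monoid X) (PIstar_monoid X)"
    unfolding hom_def PIstar_monoid_def using Phi_in(1)[OF s] Phi_prod[OF s] by auto
  have b: "bij_betw (Phi X \<sigma>) (PIstar X) (PIstar X)"
  proof (rule bij_betw_byWitness[of _ "Phi X ?t"])
    show "\<forall>P\<in>PIstar X. Phi X ?t (Phi X \<sigma> P) = P"
    proof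
      fix P assume P: "P \<in> PIstar X"
      show "Phi X ?t (Phi X \<sigma> P) = P"
        using Phi_comp[OF t s P] Bij_compose_restrict_eq[OF s] Phi_id[OF P] by simp
    qed
    show "\<forall>P\<in>PIstar X. Phi X \<sigma> (Phi X ?t P) = P"
    proof
      fix P assume P: "P \<in> PIstar X"
      show "Phi X \<sigma> (Phi X ?t P) = P"
        using Phi_comp[OF s t P] compose_right_inv[OF s] Phi_id[OF P] by simp
    qed
    show "Phi X \<sigma> ` PIstar X \<subseteq> PIstar X" using Phi_in(1)[OF s] by auto
    show "Phi X ?t ` PIstar X \<subseteq> PIstar X" using Phi_in(1)[OF t] by auto
  qed
  have "Phi X \<sigma> \<in> Bij (PIstar X)" unfolding Bij_def using b unfolding Phi_def by simp
  then show ?thesis using h unfolding auto_def PIstar_monoid_def by simp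
qed



lemma carrier_PI[simp]: "carrier (PIstar_monoid X) = PIstar X"
  and mult_PI[simp]: "mult (PIstar_monoid X) = PI_prod X"
  unfolding PIstar_monoid_def by simp_all

lemma Phi_inj:
  assumes s: "\<sigma> \<in> Bij X" and t: "\<tau> \<in> Bij X" and e: "Phi X \<sigma> = Phi X \<tau>"
  shows "\<sigma> = \<tau>"
proof (rule extensionalityI[of _ X])
  show "\<sigma> \<in> extensional X" "\<tau> \<in> extensional X" using s t by (simp_all add: Bij_imp_extensional)
  fix x assume x: "x \<in> X"
  have xN: "{x} \<in> NE X" using x unfolding NE_def by auto
  have v: "lvalid X (II {x})" using II_valid[OF xN] .
  have P: "enc X (II {x}) \<in> PIstar X" using enc_PIstar[OF v] .
  have "mapL \<sigma> (II {x}) = mapL \<tau> (II {x})"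
    using Phi_in(2)[OF s P] Phi_in(2)[OF t P] e lines_enc[OF v] by simp
  then show "\<sigma> x = \<tau> x" unfolding mapL_def II_def by simp
qed

lemma Phi_surj:
  assumes \<phi>: "\<phi> \<in> auto (PIstar_monoid X)"
  shows "\<exists>\<sigma>\<in>Bij X. \<phi> = Phi X \<sigma>"
proof -
  let ?C = "PIstar X"
  have hom\<phi>: "\<phi> \<in> hom (PIstar_monoid X) (PIstar_monoid X)" and B\<phi>: "\<phi> \<in> Bij ?C"
    using \<phi> unfolding auto_def by auto
  have inC: "\<phi> P \<in> ?C" if "P \<in> ?C" for P using hom\<phi> that unfolding hom_def by auto
  have mul: "\<phi> (PI_prod X P Q) = PI_prod X (\<phi> P) (\<phi> Q)" if "P \<in> ?C" "Q \<in> ?C" for P Q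
    using hom\<phi> that unfolding hom_def by auto
  have b\<phi>: "bij_betw \<phi> ?C ?C" using B\<phi> unfolding Bij_def by simp
  define \<psi> where "\<psi> = (\<lambda>L. lines (\<phi> (enc X L)))"
  have la: "lauto X \<psi>"
  proof
    show "bij_betw \<psi> {L. lvalid X L} {L. lvalid X L}"
    proof (rule bij_betw_imageI)
      show "inj_on \<psi> {L. lvalid X L}"
      proof
        fix L M assume L0: "L \<in> {L. lvalid X L}" and M0: "M \<in> {L. lvalid X L}" and e: "\<psi> L = \<psi> M"
        have L: "lvalid X L" and M: "lvalid X M" using L0 M0 by auto
        have eL: "enc X L \<in> ?C" and eM: "enc X M \<in> ?C" using enc_PIstar L M by blast+
        have "\<phi> (enc X L) = enc X (\<psi> L)" unfolding \<psi>_def using enc_lines[OF inC[OF eL]] by simp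
        also have "\<dots> = enc X (\<psi> M)" using e by simp
        also have "\<dots> = \<phi> (enc X M)" unfolding \<psi>_def using enc_lines[OF inC[OF eM]] by simp
        finally have "enc X L = enc X M" using b\<phi> eL eM unfolding bij_betw_def inj_on_def by blast
        then have "lines (enc X L) = lines (enc X M)" by simp
        then show "L = M" using lines_enc[OF L] lines_enc[OF M] by simp
      qed
      show "\<psi> ` {L. lvalid X L} = {L. lvalid X L}"
      proof
        show "\<psi> ` {L. lvalid X L} \<subseteq> {L. lvalid X L}"
        proof
          fix N assume "N \<in> \<psi> ` {L. lvalid X L}"
          then obtain L where L: "lvalid X L" "N = \<psi> L" by blast
          show "N \<in> {L. lvalid X L}" using lines_valid[OF inC[OF enc_PIstar[OF L(1)]]] L(2)
            unfolding \<psi>_def by simp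
        qed
        show "{L. lvalid X L} \<subseteq> \<psi> ` {L. lvalid X L}"
        proof
          fix N assume N: "N \<in> {L. lvalid X L}"
          then have "enc X N \<in> ?C" using enc_PIstar by blast
          then have "enc X N \<in> \<phi> ` ?C" using b\<phi> unfolding bij_betw_def by simp
          then obtain P where P: "P \<in> ?C" "\<phi> P = enc X N" by (elim imageE) simp
          have "\<psi> (lines P) = N" unfolding \<psi>_def using enc_lines[OF P(1)] P(2) lines_enc[of X N] N by simp
          moreover have "lines P \<in> {L. lvalid X L}" using lines_valid[OF P(1)] by simp
          ultimately show "N \<in> \<psi> ` {L. lvalid X L}" by blast
        qed
      qed
    qed
  next
    fix L M assume L: "lvalid X L" and M: "lvalid X M"
    have eL: "enc X L \<in> ?C" and eM: "enc X M \<in> ?C" using enc_PIstar L M by blast+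
    have "enc X (lcomp L M) = PI_prod X (enc X L) (enc X M)"
      unfolding PI_prod_enc using lines_enc[OF L] lines_enc[OF M] by simp
    then have "\<phi> (enc X (lcomp L M)) = PI_prod X (\<phi> (enc X L)) (\<phi> (enc X M))"
      using mul[OF eL eM] by simp
    also have "\<dots> = enc X (lcomp (\<psi> L) (\<psi> M))" unfolding PI_prod_enc \<psi>_def ..
    finally have "\<psi> (lcomp L M) = lines (enc X (lcomp (\<psi> L) (\<psi> M)))" unfolding \<psi>_def by simp
    also have "\<dots> = lcomp (\<psi> L) (\<psi> M)"
      unfolding \<psi>_def by (rule lines_enc[OF lcomp_valid[OF lines_valid[OF inC[OF eL]] lines_valid[OF inC[OF eM]]]])
    finally show "\<psi> (lcomp L M) = lcomp (\<psi> L) (\<psi> M)" .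
  qed
  obtain \<sigma> where s: "\<sigma> \<in> Bij X" and e: "\<And>L. lvalid X L \<Longrightarrow> \<psi> L = mapL \<sigma> L"
    using lauto.main[OF la] by blast
  have "\<phi> = Phi X \<sigma>"
  proof (rule extensionalityI[of _ ?C])
    show "\<phi> \<in> extensional ?C" using B\<phi> by (simp add: Bij_imp_extensional)
    show "Phi X \<sigma> \<in> extensional ?C" unfolding Phi_def by simp
    fix P assume P: "P \<in> ?C"
    have "\<phi> P = enc X (lines (\<phi> (enc X (lines P))))" using enc_lines[OF P] enc_lines[OF inC[OF P]] by simp
    also have "\<dots> = enc X (mapL \<sigma> (lines P))" using e[OF lines_valid[OF P]] unfolding \<psi>_def by simp
    finally show "\<phi> P = Phi X \<sigma> P" unfolding Phi_def using P by simp
  qed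
  then show ?thesis using s by blast
qed

theorem mainTheorem16:
  fixes X :: "'a set"
  shows "AutoGroup (PIstar_monoid X) \<cong> BijGroup X"
proof -
  have cA: "carrier (AutoGroup (PIstar_monoid X)) = auto (PIstar_monoid X)"
    unfolding AutoGroup_def by simp
  have cB: "carrier (BijGroup X) = Bij X" unfolding BijGroup_def by simp
  have h: "Phi X \<in> hom (BijGroup X) (AutoGroup (PIstar_monoid X))"
    unfolding hom_def
  proof (intro CollectI conjI ballI)
    show "Phi X \<in> carrier (BijGroup X) \<rightarrow> carrier (AutoGroup (PIstar_monoid X))"
      unfolding cA cB using Phi_auto by blast
    fix \<sigma> \<tau> assume s: "\<sigma> \<in> carrier (BijGroup X)" and t: "\<tau> \<in> carrier (BijGroup X)"
    then have s': "\<sigma> \<in> Bij X" and t': "\<tau> \<in> Bij X" using cB by auto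
    have BA: "Phi X \<sigma> \<in> Bij (PIstar X)" "Phi X \<tau> \<in> Bij (PIstar X)"
      using Phi_auto[OF s'] Phi_auto[OF t'] unfolding auto_def by auto
    have l: "\<sigma> \<otimes>\<^bsub>BijGroup X\<^esub> \<tau> = compose X \<sigma> \<tau>" using s' t' unfolding BijGroup_def by simp
    have r: "Phi X \<sigma> \<otimes>\<^bsub>AutoGroup (PIstar_monoid X)\<^esub> Phi X \<tau> = compose (PIstar X) (Phi X \<sigma>) (Phi X \<tau>)"
      using BA unfolding AutoGroup_def BijGroup_def by simp
    have "Phi X (compose X \<sigma> \<tau>) = compose (PIstar X) (Phi X \<sigma>) (Phi X \<tau>)"
    proof (rule extensionalityI[of _ "PIstar X"])
      show "Phi X (compose X \<sigma> \<tau>) \<in> extensional (PIstar X)" unfolding Phi_def by simp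
      show "compose (PIstar X) (Phi X \<sigma>) (Phi X \<tau>) \<in> extensional (PIstar X)" unfolding compose_def by simp
      fix P assume P: "P \<in> PIstar X"
      show "Phi X (compose X \<sigma> \<tau>) P = compose (PIstar X) (Phi X \<sigma>) (Phi X \<tau>) P"
        using Phi_comp[OF s' t' P] P unfolding compose_def by simp
    qed
    then show "Phi X (\<sigma> \<otimes>\<^bsub>BijGroup X\<^esub> \<tau>) = Phi X \<sigma> \<otimes>\<^bsub>AutoGroup (PIstar_monoid X)\<^esub> Phi X \<tau>"
      using l r by simp
  qed
  have b: "bij_betw (Phi X) (carrier (BijGroup X)) (carrier (AutoGroup (PIstar_monoid X)))"
    unfolding cA cB
  proof (rule bij_betw_imageI)
    show "inj_on (Phi X) (Bij X)" using Phi_inj by (meson inj_onI)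
    show "Phi X ` Bij X = auto (PIstar_monoid X)"
    proof
      show "Phi X ` Bij X \<subseteq> auto (PIstar_monoid X)" using Phi_auto by blast
      show "auto (PIstar_monoid X) \<subseteq> Phi X ` Bij X"
      proof
        fix \<phi> assume "\<phi> \<in> auto (PIstar_monoid X)"
        then obtain \<sigma> where "\<sigma> \<in> Bij X" "\<phi> = Phi X \<sigma>" using Phi_surj by blast
        then show "\<phi> \<in> Phi X ` Bij X" by blast
      qed
    qed
  qed
  have "BijGroup X \<cong> AutoGroup (PIstar_monoid X)"
    using is_isoI[OF isoI[OF h b]] .
  then show ?thesis using group.iso_sym[OF group_BijGroup] by blast
qed

end
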